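(* Let $s,t,k$ be non-negative integers with $t \le A(s,2k-2,k)$. For every family $\mathscr{F}$ of $t$ graphs, each having $n$ vertices and being $p$-almost equitably $k$-colorable, \[ \mathscr{U}(\mathscr{F}) ~\le~ s\left\lceil \frac{n-p}{k}\right\rceil + tp . \]
   Context: All graphs are finite and simple. A graph $U$ is an induced-universal graph for a family $\mathscr{F}$ if every graph of $\mathscr{F}$ is isomorphic to an induced subgraph of $U$; $\mathscr{U}(\mathscr{F})$ is the smallest number of vertices of such a $U$. A $k$-coloring is equitable if its $k$ color classes (stable sets) have sizes pairwise differing by at most one; a graph $G$ is $p$-almost equitably $k$-colorable if there is a set $X$ of at most $p$ vertices such that $G\setminus X$ has an equitable $k$-coloring. $A(n,d,w)$ denotes the maximum number of binary words of length $n$ and Hamming weight $w$ that are pairwise at Hamming distance at least $d$; equivalently $A(n,2k-2,k)$ is the maximum number of pairwise edge-disjoint copies of $K_k$ in $K_n$. *)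

theory Defs
  imports Complex_Main
begin

definition simple_graph :: "'a set \<Rightarrow> 'a set set \<Rightarrow> bool" where
  "simple_graph V E \<longleftrightarrow> finite V \<and> (\<forall>e\<in>E. e \<subseteq> V \<and> card e = 2)"

definition induced_embedding ::
  "'a set \<Rightarrow> 'a set set \<Rightarrow> 'b set \<Rightarrow> 'b set set \<Rightarrow> ('a \<Rightarrow> 'b) \<Rightarrow> bool" where
  "induced_embedding V E W F f \<longleftrightarrow>
     inj_on f V \<and> f ` V \<subseteq> W \<and>
     (\<forall>x\<in>V. \<forall>y\<in>V. {x, y} \<in> E \<longleftrightarrow> {f x, f y} \<in> F)"

definition induced_universal ::
  "'b set \<Rightarrow> 'b set set \<Rightarrow> (nat \<Rightarrow> 'a set \<times> 'a set set) \<Rightarrow> nat \<Rightarrow> bool" where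
  "induced_universal W F Gs t \<longleftrightarrow> simple_graph W F \<and>
     (\<forall>i<t. \<exists>f. induced_embedding (fst (Gs i)) (snd (Gs i)) W F f)"

definition univ_num :: "(nat \<Rightarrow> 'a set \<times> 'a set set) \<Rightarrow> nat \<Rightarrow> nat" where
  "univ_num Gs t = (LEAST m. \<exists>F. induced_universal {0..<m} F Gs t)"

definition equitably_colorable :: "'a set \<Rightarrow> 'a set set \<Rightarrow> nat \<Rightarrow> bool" where
  "equitably_colorable V E k \<longleftrightarrow> (\<exists>c :: 'a \<Rightarrow> nat.
     c ` V \<subseteq> {..<k} \<and>
     (\<forall>x\<in>V. \<forall>y\<in>V. {x, y} \<in> E \<longrightarrow> c x \<noteq> c y) \<and>
     (\<forall>i<k. \<forall>j<k. card {v\<in>V. c v = i} \<le> card {v\<in>V. c v = j} + 1))"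

definition almost_equitably_colorable :: "nat \<Rightarrow> 'a set \<Rightarrow> 'a set set \<Rightarrow> nat \<Rightarrow> bool" where
  "almost_equitably_colorable p V E k \<longleftrightarrow> (\<exists>X. X \<subseteq> V \<and> card X \<le> p \<and>
     equitably_colorable (V - X) {e\<in>E. e \<subseteq> V - X} k)"

definition hamming_weight :: "bool list \<Rightarrow> nat" where
  "hamming_weight x = length (filter id x)"

definition hamming_dist :: "bool list \<Rightarrow> bool list \<Rightarrow> nat" where
  "hamming_dist x y = card {i. i < length x \<and> x ! i \<noteq> y ! i}"

definition const_weight_code :: "nat \<Rightarrow> nat \<Rightarrow> nat \<Rightarrow> bool list set \<Rightarrow> bool" where
  "const_weight_code n d w C \<longleftrightarrow>
     (\<forall>x\<in>C. length x = n \<and> hamming_weight x = w) \<and>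
     (\<forall>x\<in>C. \<forall>y\<in>C. x \<noteq> y \<longrightarrow> d \<le> hamming_dist x y)"

definition A_code :: "nat \<Rightarrow> nat \<Rightarrow> nat \<Rightarrow> nat" where
  "A_code n d w = Max (card ` {C. const_weight_code n d w C})"

end

theory Submission
  imports Defs
begin

lemma code_inter:
  assumes "length x = s" "length y = s" "hamming_weight x = k" "hamming_weight y = k"
    "2*k-2 \<le> hamming_dist x y"
  shows "card ({a. a<s \<and> x!a} \<inter> {a. a<s \<and> y!a}) \<le> 1"
proof -
  define A where "A = {a. a<s \<and> x!a}"
  define B where "B = {a. a<s \<and> y!a}"
  have fA: "finite A" "finite B" unfolding A_def B_def by auto
  have cA: "card A = k" using assms(1,3) unfolding A_def hamming_weight_def
    by (simp add: length_filter_conv_card)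
  have cB: "card B = k" using assms(2,4) unfolding B_def hamming_weight_def
    by (simp add: length_filter_conv_card)
  have eq: "{i. i < length x \<and> x ! i \<noteq> y ! i} = (A - B) \<union> (B - A)"
    unfolding A_def B_def using assms(1,2) by auto
  have "hamming_dist x y = card (A - B) + card (B - A)"
    unfolding hamming_dist_def eq by (rule card_Un_disjoint) (use fA in auto)
  also have "\<dots> = (k - card (A \<inter> B)) + (k - card (A \<inter> B))"
    using card_Diff_subset_Int[of A B] card_Diff_subset_Int[of B A] fA cA cB
    by (simp add: Int_commute)
  finally have "2*k-2 \<le> (k - card (A \<inter> B)) + (k - card (A \<inter> B))" using assms(5) by simp
  moreover have "card (A \<inter> B) \<le> k" using cA fA by (metis card_mono inf_le1)
  ultimately show ?thesis unfolding A_def[symmetric] B_def[symmetric] by arith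
qed

lemma divmod_eq:
  fixes a b r r' m :: nat
  assumes "r < m" "r' < m" "a*m + r = b*m + r'"
  shows "a = b \<and> r = r'"
proof -
  have m: "m > 0" using assms by simp
  have e1: "(a*m + r) div m = a" using assms(1) m by simp
  have e2: "(b*m + r') div m = b" using assms(2) m by simp
  have "a = b" using e1 e2 assms(3) by metis
  then show ?thesis using assms by simp
qed

lemma block_lt:
  fixes a r m s :: nat
  assumes "a < s" "r < m"
  shows "a*m + r < s*m"
proof -
  have "a*m + r < a*m + m" using assms by simp
  also have "\<dots> = (a+1)*m" by simp
  also have "\<dots> \<le> s*m" using assms by (intro mult_right_mono) auto
  finally show ?thesis .
qed

lemma local_embed:
  fixes V :: "'a set" and E :: "'a set set" and S :: "nat set"
  assumes sg: "simple_graph V E" and cV: "card V = n"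
    and aec: "almost_equitably_colorable p V E k"
    and Ss: "S \<subseteq> {..<s}" and cS: "card S = k"
    and km: "0 < k \<longrightarrow> n - p \<le> k * m"
    and base: "s * m \<le> base"
  shows "\<exists>f. inj_on f V \<and>
     (\<forall>v\<in>V. (\<exists>r<p. f v = base + r) \<or> (\<exists>a\<in>S. \<exists>r<m. f v = a*m + r)) \<and>
     (\<forall>x\<in>V. \<forall>y\<in>V. \<forall>a r r'. a < s \<longrightarrow> r < m \<longrightarrow> r' < m \<longrightarrow> f x = a*m+r \<longrightarrow> f y = a*m+r'
          \<longrightarrow> {x,y} \<notin> E)"
proof -
  have fV: "finite V" using sg unfolding simple_graph_def by auto
  obtain X where XV: "X \<subseteq> V" and cX: "card X \<le> p" and
    ec: "equitably_colorable (V - X) {e\<in>E. e \<subseteq> V - X} k"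
    using aec unfolding almost_equitably_colorable_def by auto
  obtain c :: "'a \<Rightarrow> nat" where cr: "c ` (V - X) \<subseteq> {..<k}"
    and cst: "\<forall>x\<in>V-X. \<forall>y\<in>V-X. {x, y} \<in> {e\<in>E. e \<subseteq> V - X} \<longrightarrow> c x \<noteq> c y"
    and ceq: "\<forall>i<k. \<forall>j<k. card {v\<in>V-X. c v = i} \<le> card {v\<in>V-X. c v = j} + 1"
    using ec unfolding equitably_colorable_def by blast
  have stable: "c x \<noteq> c y" if "x \<in> V-X" "y \<in> V-X" "{x,y} \<in> E" for x y
    using cst that by auto
  define Z where "Z j = {v\<in>V-X. c v = j}" for j
  have fZ: "finite (Z j)" for j using fV unfolding Z_def by auto
  have "\<forall>j. \<exists>T. T \<subseteq> Z j \<and> card T = min (card (Z j)) m"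
    by (meson min.cobounded1 obtain_subset_with_card_n)
  then obtain Z' where Z'Z: "\<And>j. Z' j \<subseteq> Z j" and cZ': "\<And>j. card (Z' j) = min (card (Z j)) m"
    by metis
  have fZ': "finite (Z' j)" for j using fZ Z'Z finite_subset by metis
  define U where "U = (\<Union>j\<in>{..<k}. Z' j)"
  have UV: "U \<subseteq> V - X" unfolding U_def using Z'Z unfolding Z_def by blast
  have disj: "\<forall>i\<in>{..<k}. \<forall>j\<in>{..<k}. i \<noteq> j \<longrightarrow> Z' i \<inter> Z' j = {}"
    using Z'Z unfolding Z_def by blast
  have cU: "card U = (\<Sum>j<k. min (card (Z j)) m)"
    unfolding U_def using card_UN_disjoint[OF _ _ disj] fZ' cZ' by simp
  have VXZ: "V - X = (\<Union>j\<in>{..<k}. Z j)" using cr unfolding Z_def by blast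
  have disjZ: "\<forall>i\<in>{..<k}. \<forall>j\<in>{..<k}. i \<noteq> j \<longrightarrow> Z i \<inter> Z j = {}"
    unfolding Z_def by blast
  have cVX: "card (V - X) = (\<Sum>j<k. card (Z j))"
    unfolding VXZ using card_UN_disjoint[OF _ _ disjZ] fZ by simp
  have cVX2: "card (V - X) = n - card X" using cV XV fV by (simp add: card_Diff_subset finite_subset)
  have cUbig: "n - p \<le> card U"
  proof (cases "\<exists>j0<k. card (Z j0) < m")
    case True
    then obtain j0 where j0: "j0 < k" "card (Z j0) < m" by auto
    have "min (card (Z j)) m = card (Z j)" if "j < k" for j
      using ceq j0 that unfolding Z_def by fastforce
    then have "card U = card (V - X)" unfolding cU cVX by simp
    then show ?thesis using cVX2 cX by simp
  next
    case False
    then have "min (card (Z j)) m = m" if "j < k" for j using that by force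
    then have cUm: "card U = k * m" unfolding cU by simp
    show ?thesis
    proof (cases "k = 0")
      case True
      then show ?thesis using cVX cVX2 cX by simp
    next
      case False
      then show ?thesis using km cUm by simp
    qed
  qed
  define Y where "Y = V - U"
  have fU: "finite U" using UV fV finite_subset by blast
  have cY0: "card Y = n - card U" unfolding Y_def using UV fU cV card_Diff_subset[of U V] by auto
  have cY: "card Y \<le> p" using cY0 cUbig by arith
  have "\<forall>j. \<exists>h. bij_betw h (Z' j) {0..<card (Z' j)}"
    using fZ' ex_bij_betw_finite_nat by blast
  then obtain h where hb: "\<And>j. bij_betw (h j) (Z' j) {0..<card (Z' j)}" by metis
  obtain g where gb: "bij_betw g Y {0..<card Y}"
    using ex_bij_betw_finite_nat[of Y] fV unfolding Y_def by auto
  have fS: "finite S" using Ss finite_subset by blast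
  obtain pos where pb: "bij_betw pos {0..<k} S"
    using ex_bij_betw_nat_finite[OF fS] cS by auto
  define f where "f v = (if v \<in> Y then base + g v else pos (c v) * m + h (c v) v)" for v
  have inU: "v \<in> Z' (c v) \<and> c v < k" if "v \<in> V" "v \<notin> Y" for v
  proof -
    have "v \<in> U" using that unfolding Y_def by auto
    then obtain j where "j < k" "v \<in> Z' j" unfolding U_def by auto
    moreover then have "c v = j" using Z'Z unfolding Z_def by auto
    ultimately show ?thesis by simp
  qed
  have hlt: "h (c v) v < m" "pos (c v) \<in> S" "pos (c v) < s" if "v \<in> V" "v \<notin> Y" for v
  proof -
    have "h (c v) v < card (Z' (c v))" using hb inU[OF that] bij_betwE by fastforce
    moreover have "card (Z' (c v)) \<le> m" using cZ'[of "c v"] by simp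
    ultimately show "h (c v) v < m" by linarith
    show "pos (c v) \<in> S" using pb inU[OF that] bij_betwE by fastforce
    then show "pos (c v) < s" using Ss by auto
  qed
  have glt: "g v < p" if "v \<in> Y" for v
    using gb that cY bij_betwE by fastforce
  have nonY_lt: "f v < s*m" if "v \<in> V" "v \<notin> Y" for v
    unfolding f_def using that hlt block_lt by simp
  have inj: "inj_on f V"
  proof (rule inj_onI)
    fix x y assume xV: "x \<in> V" and yV: "y \<in> V" and fxy: "f x = f y"
    show "x = y"
    proof (cases "x \<in> Y")
      case True
      then have "y \<in> Y" using nonY_lt[OF yV] fxy base unfolding f_def by (cases "y \<in> Y") auto
      then show ?thesis using True fxy gb unfolding f_def bij_betw_def inj_on_def by auto
    next
      case False
      then have yY: "y \<notin> Y" using nonY_lt[OF xV] fxy base unfolding f_def by (cases "y \<in> Y") auto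
      have "pos (c x) * m + h (c x) x = pos (c y) * m + h (c y) y"
        using fxy False yY unfolding f_def by simp
      then have "pos (c x) = pos (c y)" and hh: "h (c x) x = h (c y) y"
        using divmod_eq hlt[OF xV False] hlt[OF yV yY] by blast+
      then have "c x = c y" using pb inU[OF xV False] inU[OF yV yY]
        unfolding bij_betw_def inj_on_def by auto
      then show ?thesis using hh hb inU[OF xV False] inU[OF yV yY]
        unfolding bij_betw_def inj_on_def by metis
    qed
  qed
  have rng: "(\<exists>r<p. f v = base + r) \<or> (\<exists>a\<in>S. \<exists>r<m. f v = a*m + r)" if "v \<in> V" for v
  proof (cases "v \<in> Y")
    case True then show ?thesis using glt unfolding f_def by auto
  next
    case False then show ?thesis using hlt[OF that False] unfolding f_def by auto
  qed
  have edge: "{x,y} \<notin> E" if xV: "x\<in>V" and yV: "y\<in>V" and "a < s" "r < m" "r' < m"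
    "f x = a*m+r" "f y = a*m+r'" for x y a r r'
  proof
    assume xyE: "{x,y} \<in> E"
    have "a*m + r < s*m" "a*m+r' < s*m" using block_lt that by auto
    then have xY: "x \<notin> Y" and yY: "y \<notin> Y" using that base unfolding f_def by (auto split: if_splits)
    have "pos (c x) = a" using divmod_eq[of "h (c x) x" m r "pos (c x)" a] that hlt[OF xV xY]
      xY unfolding f_def by simp
    moreover have "pos (c y) = a" using divmod_eq[of "h (c y) y" m r' "pos (c y)" a] that hlt[OF yV yY]
      yY unfolding f_def by simp
    ultimately have "c x = c y" using pb inU[OF xV xY] inU[OF yV yY]
        unfolding bij_betw_def inj_on_def by auto
    moreover have "x \<in> V - X" "y \<in> V - X" using xV yV xY yY UV unfolding Y_def by auto
    ultimately show False using stable xyE by blast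
  qed
  show ?thesis using inj rng edge by blast
qed



lemma ceil_nn: "0 \<le> x \<Longrightarrow> 0 \<le> \<lceil>x::real\<rceil>" by simp

theorem theorem3:
  fixes s t k n p :: nat
    and Gs :: "nat \<Rightarrow> 'a set \<times> 'a set set"
  assumes "t \<le> A_code s (2 * k - 2) k"
    and "\<forall>i<t. simple_graph (fst (Gs i)) (snd (Gs i))"
    and "\<forall>i<t. card (fst (Gs i)) = n"
    and "\<forall>i<t. almost_equitably_colorable p (fst (Gs i)) (snd (Gs i)) k"
  shows "int (univ_num Gs t) \<le> int s * \<lceil>real (n - p) / real k\<rceil> + int (t * p)"
proof -
  define Cs where "Cs = {C. const_weight_code s (2 * k - 2) k C}"
  have fL: "finite {x :: bool list. length x = s}"
    using finite_lists_length_eq[of "UNIV :: bool set" s] by simp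
  have "Cs \<subseteq> Pow {x :: bool list. length x = s}"
    unfolding Cs_def const_weight_code_def by auto
  then have fCs: "finite Cs" using fL finite_Pow_iff finite_subset by metis
  have "{} \<in> Cs" unfolding Cs_def const_weight_code_def by simp
  then have "A_code s (2 * k - 2) k \<in> card ` Cs"
    unfolding A_code_def Cs_def[symmetric] using fCs by (intro Max_in) auto
  then obtain C where CC: "C \<in> Cs" and cC: "card C = A_code s (2 * k - 2) k" by auto
  have "C \<subseteq> {x :: bool list. length x = s}" using CC unfolding Cs_def const_weight_code_def by auto
  then have fC: "finite C" using fL finite_subset by blast
  obtain C' where C'C: "C' \<subseteq> C" and cC': "card C' = t" and fC': "finite C'"
    using obtain_subset_with_card_n[of t C] assms(1) cC by metis
  obtain w where wb: "bij_betw w {0..<t} C'" using ex_bij_betw_nat_finite[OF fC'] cC' by auto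
  have wC: "w i \<in> C" if "i < t" for i using wb C'C that bij_betwE by fastforce
  have winj: "w i \<noteq> w j" if "i < t" "j < t" "i \<noteq> j" for i j
    using wb that unfolding bij_betw_def inj_on_def by auto
  have cwc: "const_weight_code s (2 * k - 2) k C" using CC unfolding Cs_def by simp
  define S where "S i = {a. a < s \<and> w i ! a}" for i
  have Ss: "S i \<subseteq> {..<s}" for i unfolding S_def by auto
  have cS: "card (S i) = k" if "i < t" for i
  proof -
    have "length (w i) = s" "hamming_weight (w i) = k"
      using cwc wC[OF that] unfolding const_weight_code_def by auto
    then show ?thesis unfolding S_def hamming_weight_def by (simp add: length_filter_conv_card)
  qed
  have cSS: "card (S i \<inter> S j) \<le> 1" if "i < t" "j < t" "i \<noteq> j" for i j
  proof -
    have "w i \<in> C" "w j \<in> C" "w i \<noteq> w j" using wC winj that by auto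
    then have "length (w i) = s" "length (w j) = s" "hamming_weight (w i) = k"
      "hamming_weight (w j) = k" "2*k-2 \<le> hamming_dist (w i) (w j)"
      using cwc unfolding const_weight_code_def by auto
    then show ?thesis unfolding S_def by (rule code_inter)
  qed
  define m where "m = nat \<lceil>real (n - p) / real k\<rceil>"
  have km: "0 < k \<longrightarrow> n - p \<le> k * m"
  proof
    assume k: "0 < k"
    have "real (n - p) / real k \<le> real m" unfolding m_def by linarith
    then have "real (n - p) \<le> real k * real m" using k by (simp add: divide_le_eq mult.commute)
    then show "n - p \<le> k * m" by (metis of_nat_le_iff of_nat_mult)
  qed
  define P where "P i f \<longleftrightarrow> inj_on f (fst (Gs i)) \<and>
     (\<forall>v\<in>fst (Gs i). (\<exists>r<p. f v = s*m + i*p + r) \<or> (\<exists>a\<in>S i. \<exists>r<m. f v = a*m + r)) \<and>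
     (\<forall>x\<in>fst (Gs i). \<forall>y\<in>fst (Gs i). \<forall>a r r'. a < s \<longrightarrow> r < m \<longrightarrow> r' < m \<longrightarrow> f x = a*m+r \<longrightarrow> f y = a*m+r'
          \<longrightarrow> {x,y} \<notin> snd (Gs i))" for i and f :: "'a \<Rightarrow> nat"
  have "\<forall>i<t. \<exists>f. P i f"
  proof (intro allI impI)
    fix i assume i: "i < t"
    show "\<exists>f. P i f" unfolding P_def
      using local_embed[of "fst (Gs i)" "snd (Gs i)" n p k "S i" s m "s*m + i*p"]
        assms(2,3,4) i Ss cS km by auto
  qed
  then obtain ff where ffP: "\<And>i. i < t \<Longrightarrow> P i (ff i)" by metis
  define M where "M = s*m + t*p"
  define Fe where "Fe = {ff i ` e | i e. i < t \<and> e \<in> snd (Gs i)}"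
  have common: "\<exists>a \<in> S i \<inter> S j. \<exists>r<m. ff i v = a*m + r"
    if ij: "i < t" "j < t" "i \<noteq> j" and v: "v \<in> fst (Gs i)" and v': "v' \<in> fst (Gs j)"
      and eq: "ff i v = ff j v'" for i j v v'
  proof -
    have ri: "(\<exists>r<p. ff i v = s*m + i*p + r) \<or> (\<exists>a\<in>S i. \<exists>r<m. ff i v = a*m + r)"
      using ffP[OF ij(1)] v unfolding P_def by blast
    have rj: "(\<exists>r<p. ff j v' = s*m + j*p + r) \<or> (\<exists>a\<in>S j. \<exists>r<m. ff j v' = a*m + r)"
      using ffP[OF ij(2)] v' unfolding P_def by blast
    show ?thesis
    proof (cases "\<exists>r<p. ff i v = s*m + i*p + r")
      case True
      then obtain r where r: "r < p" "ff i v = s*m + i*p + r" by auto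
      show ?thesis
      proof (cases "\<exists>r<p. ff j v' = s*m + j*p + r")
        case True
        then obtain r' where r': "r' < p" "ff j v' = s*m + j*p + r'" by auto
        have "i*p + r = j*p + r'" using r r' eq by simp
        then have "i = j" using divmod_eq r(1) r'(1) by blast
        then show ?thesis using ij by simp
      next
        case False
        then obtain a r' where "a \<in> S j" "r' < m" "ff j v' = a*m + r'" using rj by auto
        moreover then have "a*m + r' < s*m" using block_lt Ss by blast
        ultimately show ?thesis using r eq by simp
      qed
    next
      case False
      then obtain a r where ar: "a \<in> S i" "r < m" "ff i v = a*m + r" using ri by auto
      then have lt: "a*m + r < s*m" using block_lt Ss by blast
      show ?thesis
      proof (cases "\<exists>r<p. ff j v' = s*m + j*p + r")
        case True
        then show ?thesis using lt ar eq by auto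
      next
        case False
        then obtain b r' where br: "b \<in> S j" "r' < m" "ff j v' = b*m + r'" using rj by auto
        then have "a = b" using divmod_eq[of r m r' a b] ar eq by simp
        then show ?thesis using ar br by auto
      qed
    qed
  qed
  have ffrange: "ff i v < M" if "i < t" "v \<in> fst (Gs i)" for i v
  proof -
    have "(\<exists>r<p. ff i v = s*m + i*p + r) \<or> (\<exists>a\<in>S i. \<exists>r<m. ff i v = a*m + r)"
      using ffP[OF that(1)] that(2) unfolding P_def by blast
    then show ?thesis
    proof
      assume "\<exists>r<p. ff i v = s*m + i*p + r"
      then obtain r where r: "r < p" "ff i v = s*m + i*p + r" by auto
      have "i*p + r < t*p" using block_lt[of i t r p] r that by simp
      then show ?thesis unfolding M_def using r by simp
    next
      assume "\<exists>a\<in>S i. \<exists>r<m. ff i v = a*m + r"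
      then obtain a r where ar: "a \<in> S i" "r < m" "ff i v = a*m + r" by auto
      then have "a < s" using Ss by auto
      then have "a*m + r < s*m" using block_lt ar by blast
      then show ?thesis unfolding M_def using ar by simp
    qed
  qed
  have emb: "induced_embedding (fst (Gs i)) (snd (Gs i)) {0..<M} Fe (ff i)" if i: "i < t" for i
    unfolding induced_embedding_def
  proof (intro conjI ballI)
    show inj: "inj_on (ff i) (fst (Gs i))" using ffP[OF i] unfolding P_def by blast
    show "ff i ` fst (Gs i) \<subseteq> {0..<M}" using ffrange i by auto
    fix x y assume x: "x \<in> fst (Gs i)" and y: "y \<in> fst (Gs i)"
    show "{x, y} \<in> snd (Gs i) \<longleftrightarrow> {ff i x, ff i y} \<in> Fe"
    proof
      assume "{x, y} \<in> snd (Gs i)"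
      then have "ff i ` {x,y} \<in> Fe" unfolding Fe_def using i by blast
      then show "{ff i x, ff i y} \<in> Fe" by simp
    next
      assume "{ff i x, ff i y} \<in> Fe"
      then obtain j e where j: "j < t" and e: "e \<in> snd (Gs j)" and feq: "{ff i x, ff i y} = ff j ` e"
        unfolding Fe_def by blast
      have "e \<subseteq> fst (Gs j) \<and> card e = 2" using assms(2) j e unfolding simple_graph_def by blast
      then obtain x' y' where e2: "e = {x', y'}" "x' \<noteq> y'" and x'y': "x' \<in> fst (Gs j)" "y' \<in> fst (Gs j)"
        by (metis card_2_iff insert_subset)
      show "{x, y} \<in> snd (Gs i)"
      proof (cases "j = i")
        case True
        have "ff i ` {x,y} = ff i ` e" using feq True by simp
        moreover have sub: "{x,y} \<subseteq> fst (Gs i)" "e \<subseteq> fst (Gs i)" using x y x'y' e2 True by auto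
        ultimately have "{x,y} = e" using inj_on_image_eq_iff[OF inj sub(1) sub(2)] by blast
        then show ?thesis using e True by simp
      next
        case False
        have "ff i x \<in> ff j ` e" using feq by blast
        then obtain u where u: "u \<in> e" "ff i x = ff j u" by auto
        have "ff i y \<in> ff j ` e" using feq by blast
        then obtain u' where u': "u' \<in> e" "ff i y = ff j u'" by auto
        obtain a r where ar: "a \<in> S i \<inter> S j" "r < m" "ff i x = a*m + r"
          using common[OF i j _ x _ u(2)] False u(1) e2 x'y' by blast
        obtain b r' where br: "b \<in> S i \<inter> S j" "r' < m" "ff i y = b*m + r'"
          using common[OF i j _ y _ u'(2)] False u'(1) e2 x'y' by blast
        have fin: "finite (S i \<inter> S j)" using Ss finite_subset by (meson finite_Int finite_lessThan)
        have "a = b" using cSS[OF i j] False ar(1) br(1) fin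
          by (metis One_nat_def card_le_Suc0_iff_eq)
        have "ff j x' \<in> {ff i x, ff i y}" "ff j y' \<in> {ff i x, ff i y}" using feq e2 by auto
        then obtain r1 r2 where "r1 < m" "r2 < m" "ff j x' = a*m + r1" "ff j y' = a*m + r2"
          using ar br \<open>a = b\<close> by auto
        moreover have "a < s" using ar Ss by auto
        ultimately have "{x', y'} \<notin> snd (Gs j)" using ffP[OF j] x'y' unfolding P_def by blast
        then show ?thesis using e e2 by simp
      qed
    qed
  qed
  have "induced_universal {0..<M} Fe Gs t"
    unfolding induced_universal_def
  proof (intro conjI allI impI)
    show "simple_graph {0..<M} Fe" unfolding simple_graph_def
    proof (intro conjI ballI)
      show "finite {0..<M}" by simp
      fix e' assume "e' \<in> Fe"
      then obtain i e where i: "i < t" and e: "e \<in> snd (Gs i)" and e': "e' = ff i ` e"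
        unfolding Fe_def by blast
      have ee: "e \<subseteq> fst (Gs i)" "card e = 2" using assms(2) i e unfolding simple_graph_def by auto
      show "e' \<subseteq> {0..<M}" using e' ee ffrange i by auto
      have "inj_on (ff i) e" using ffP[OF i] ee inj_on_subset unfolding P_def by blast
      then show "card e' = 2" using e' ee card_image by metis
    qed
    fix i assume "i < t"
    then show "\<exists>f. induced_embedding (fst (Gs i)) (snd (Gs i)) {0..<M} Fe f" using emb by blast
  qed
  then have "univ_num Gs t \<le> M" unfolding univ_num_def by (intro Least_le) blast
  moreover have "0 \<le> real (n - p) / real k" by simp
  then have "0 \<le> \<lceil>real (n - p) / real k\<rceil>" by (rule ceil_nn)
  then have "int m = \<lceil>real (n - p) / real k\<rceil>" unfolding m_def by (rule nat_0_le)
  ultimately show ?thesis unfolding M_def by (metis of_nat_add of_nat_le_iff of_nat_mult)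
qed

end
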